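(* Let $\Sigma$ be a complete smooth fan in $N_{\mathbb{R}}\cong\mathbb{R}^2$ with rays generated by primitive vectors $n_1,\dots,n_r\in N$ in anticlockwise order, maximal cones $\nu_j=\operatorname{cone}(n_j,n_{j+1})$ (indices mod $r$), self-intersection numbers $b_j$ and vectors $u_j\in M$ as in the context. (1) If $\vartheta$ is a semi-integral support function on $\Sigma$, then its kinks $(\ell_1,\dots,\ell_r)$ are integers forming a set of twisting numbers. (2) Conversely, every set of twisting numbers $(\ell_1,\dots,\ell_r)$ is the set of kinks of a semi-integral support function on $\Sigma$, which is unique up to adding an integral linear function (an element of $M$).
   Context: $M$ is the dual lattice of $N$. The self-intersection number $b_j$ of the toric curve corresponding to the ray $\mathbb{R}_{\ge0}n_j$ is defined by $n_{j-1}+n_{j+1}=-b_j n_j$. Let $u_j\in M$ be the unique primitive vector with $\langle u_j,n_j\rangle=0$ and $\langle u_j,n_{j+1}\rangle>0$. A semi-integral support function is a continuous function $\vartheta:N_{\mathbb{R}}\to\mathbb{R}$ which is linear on each maximal cone $\nu_j$ and satisfies $\vartheta(n_j)\in\tfrac12+\mathbb{Z}$ for all $j$. Writing $\vartheta_j\in M_{\mathbb{R}}$ for the linear function $\vartheta|_{\nu_j}$, the kink $\ell_j$ of $\vartheta$ at the ray $n_j$ is the real number with $\vartheta_j-\vartheta_{j-1}=\tfrac{\ell_j}{2}u_j$. A set of twisting numbers is an $r$-tuple of integers $(\ell_1,\dots,\ell_r)$ such that $\ell_j\equiv b_j \pmod 2$ for all $j$ and $\sum_{j=1}^r\ell_j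 u_j=0$. *)

theory Defs
  imports "HOL-Analysis.Analysis"
begin

text \<open>Conventions. N = M = int \<times> int with the standard pairing; N_R = M_R = real \<times> real.
  The rays are indexed by j \<in> {0..<r} (the paper uses 1..r); indices are taken mod r.\<close>

definition nxt :: "nat \<Rightarrow> nat \<Rightarrow> nat" where "nxt r j = (j + 1) mod r"
definition prv :: "nat \<Rightarrow> nat \<Rightarrow> nat" where "prv r j = (j + r - 1) mod r"

definition ipair :: "int \<times> int \<Rightarrow> int \<times> int \<Rightarrow> int" where
  "ipair u v = fst u * fst v + snd u * snd v"

definition rpair :: "real \<times> real \<Rightarrow> real \<times> real \<Rightarrow> real" where
  "rpair u v = fst u * fst v + snd u * snd v"

definition rvec :: "int \<times> int \<Rightarrow> real \<times> real" where
  "rvec v = (real_of_int (fst v), real_of_int (snd v))"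

definition det2 :: "int \<times> int \<Rightarrow> int \<times> int \<Rightarrow> int" where
  "det2 v w = fst v * snd w - snd v * fst w"

definition primitive :: "int \<times> int \<Rightarrow> bool" where
  "primitive v \<longleftrightarrow> gcd (fst v) (snd v) = 1"

definition maxcone :: "nat \<Rightarrow> (nat \<Rightarrow> int \<times> int) \<Rightarrow> nat \<Rightarrow> (real \<times> real) set" where
  "maxcone r n j = {a *\<^sub>R rvec (n j) + c *\<^sub>R rvec (n (nxt r j)) | a c. 0 \<le> a \<and> 0 \<le> c}"

text \<open>Complete smooth fan in R^2 with rays generated by primitive n_0,...,n_{r-1} in
  anticlockwise order and maximal cones cone(n_j,n_{j+1}): consecutive rays form a
  positively oriented lattice basis (smoothness + anticlockwise order), the maximal cones
  cover the plane and meet only along common faces (pairwise disjoint interiors).\<close>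
definition smooth_complete_fan :: "nat \<Rightarrow> (nat \<Rightarrow> int \<times> int) \<Rightarrow> bool" where
  "smooth_complete_fan r n \<longleftrightarrow>
     3 \<le> r \<and>
     (\<forall>j<r. primitive (n j)) \<and>
     inj_on n {0..<r} \<and>
     (\<forall>j<r. det2 (n j) (n (nxt r j)) = 1) \<and>
     (\<Union>j\<in>{0..<r}. maxcone r n j) = UNIV \<and>
     (\<forall>j<r. \<forall>k<r. j \<noteq> k \<longrightarrow> interior (maxcone r n j) \<inter> interior (maxcone r n k) = {})"

definition selfint :: "nat \<Rightarrow> (nat \<Rightarrow> int \<times> int) \<Rightarrow> nat \<Rightarrow> int" where
  "selfint r n j = (THE b. fst (n (prv r j)) + fst (n (nxt r j)) = - b * fst (n j) \<and>
                          snd (n (prv r j)) + snd (n (nxt r j)) = - b * snd (n j))"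

definition uvec :: "nat \<Rightarrow> (nat \<Rightarrow> int \<times> int) \<Rightarrow> nat \<Rightarrow> int \<times> int" where
  "uvec r n j = (THE u. primitive u \<and> ipair u (n j) = 0 \<and> ipair u (n (nxt r j)) > 0)"

definition semi_integral_support_function ::
    "nat \<Rightarrow> (nat \<Rightarrow> int \<times> int) \<Rightarrow> (real \<times> real \<Rightarrow> real) \<Rightarrow> bool" where
  "semi_integral_support_function r n \<theta> \<longleftrightarrow>
     continuous_on UNIV \<theta> \<and>
     (\<forall>j<r. \<exists>m. \<forall>x\<in>maxcone r n j. \<theta> x = rpair m x) \<and>
     (\<forall>j<r. \<exists>k::int. \<theta> (rvec (n j)) = real_of_int k + 1/2)"

definition theta_lin :: "nat \<Rightarrow> (nat \<Rightarrow> int \<times> int) \<Rightarrow> (real \<times> real \<Rightarrow> real) \<Rightarrow> nat \<Rightarrow> real \<times> real" where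
  "theta_lin r n \<theta> j = (THE m. \<forall>x\<in>maxcone r n j. \<theta> x = rpair m x)"

definition kink :: "nat \<Rightarrow> (nat \<Rightarrow> int \<times> int) \<Rightarrow> (real \<times> real \<Rightarrow> real) \<Rightarrow> nat \<Rightarrow> real" where
  "kink r n \<theta> j = (THE l. theta_lin r n \<theta> j - theta_lin r n \<theta> (prv r j) = (l / 2) *\<^sub>R rvec (uvec r n j))"

definition twisting_numbers :: "nat \<Rightarrow> (nat \<Rightarrow> int \<times> int) \<Rightarrow> (nat \<Rightarrow> int) \<Rightarrow> bool" where
  "twisting_numbers r n l \<longleftrightarrow>
     (\<forall>j<r. l j mod 2 = selfint r n j mod 2) \<and>
     (\<Sum>j<r. l j * fst (uvec r n j)) = 0 \<and>
     (\<Sum>j<r. l j * snd (uvec r n j)) = 0"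

end

theory Submission
  imports Defs
begin


definition rdet :: "real \<times> real \<Rightarrow> real \<times> real \<Rightarrow> real" where
  "rdet p q = fst p * snd q - snd p * fst q"
definition rot :: "real \<times> real \<Rightarrow> real \<times> real" where
  "rot p = (- snd p, fst p)"

lemma decomp_c:
  fixes p1 p2 q1 q2 w1 w2 :: "'a::comm_ring_1"
  assumes "p1*q2 - p2*q1 = 1"
  shows "w1 = (w1*q2 - w2*q1)*p1 + (p1*w2 - p2*w1)*q1"
    and "w2 = (w1*q2 - w2*q1)*p2 + (p1*w2 - p2*w1)*q2"
proof -
  have "(w1*q2 - w2*q1)*p1 + (p1*w2 - p2*w1)*q1 = w1*(p1*q2 - p2*q1)"
       "(w1*q2 - w2*q1)*p2 + (p1*w2 - p2*w1)*q2 = w2*(p1*q2 - p2*q1)"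
    by (simp_all add: algebra_simps)
  then show "w1 = (w1*q2 - w2*q1)*p1 + (p1*w2 - p2*w1)*q1"
    and "w2 = (w1*q2 - w2*q1)*p2 + (p1*w2 - p2*w1)*q2" using assms by simp_all
qed

lemma dual_c:
  fixes p1 p2 q1 q2 u1 u2 :: "'a::comm_ring_1"
  assumes "p1*q2 - p2*q1 = 1"
  shows "u1 = (u1*p1+u2*p2)*q2 - (u1*q1+u2*q2)*p2"
    and "u2 = -(u1*p1+u2*p2)*q1 + (u1*q1+u2*q2)*p1"
proof -
  have "(u1*p1+u2*p2)*q2 - (u1*q1+u2*q2)*p2 = u1*(p1*q2 - p2*q1)"
       "-(u1*p1+u2*p2)*q1 + (u1*q1+u2*q2)*p1 = u2*(p1*q2 - p2*q1)"
    by (simp_all add: algebra_simps)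
  then show "u1 = (u1*p1+u2*p2)*q2 - (u1*q1+u2*q2)*p2"
    and "u2 = -(u1*p1+u2*p2)*q1 + (u1*q1+u2*q2)*p1" using assms by simp_all
qed

lemma rdecomp: "rdet p q = 1 \<Longrightarrow> x = rdet x q *\<^sub>R p + rdet p x *\<^sub>R q"
  unfolding rdet_def
  by (cases x; cases p; cases q) (simp add: prod_eq_iff, metis decomp_c)

lemma rcoord1: "rdet p q = 1 \<Longrightarrow> rdet (a *\<^sub>R p + c *\<^sub>R q) q = a"
  unfolding rdet_def by (simp add: algebra_simps)
lemma rcoord2: "rdet p q = 1 \<Longrightarrow> rdet p (a *\<^sub>R p + c *\<^sub>R q) = c"
  unfolding rdet_def by (simp add: algebra_simps)

lemma rpair_eq_basis:
  assumes "rdet p q = 1" "rpair m p = rpair m' p" "rpair m q = rpair m' q"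
  shows "m = m'"
proof -
  obtain p1 p2 q1 q2 a b a' b' where pq: "p = (p1,p2)" "q = (q1,q2)" "m = (a,b)" "m' = (a',b')"
    by (cases p, cases q, cases m, cases m') auto
  have d: "p1*q2 - p2*q1 = 1" using assms(1) pq by (simp add: rdet_def)
  have e: "a*p1+b*p2 = a'*p1+b'*p2" "a*q1+b*q2 = a'*q1+b'*q2" using assms(2,3) pq by (simp_all add: rpair_def)
  have "a = (a*p1+b*p2)*q2 - (a*q1+b*q2)*p2" by (rule dual_c(1)[OF d])
  also have "\<dots> = (a'*p1+b'*p2)*q2 - (a'*q1+b'*q2)*p2" using e by simp
  also have "\<dots> = a'" by (rule dual_c(1)[OF d, symmetric])
  finally have "a = a'" .
  have "b = -(a*p1+b*p2)*q1 + (a*q1+b*q2)*p1" by (rule dual_c(2)[OF d])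
  also have "\<dots> = -(a'*p1+b'*p2)*q1 + (a'*q1+b'*q2)*p1" using e by simp
  also have "\<dots> = b'" by (rule dual_c(2)[OF d, symmetric])
  finally have "b = b'" .
  note \<open>a = a'\<close>
  moreover note \<open>b = b'\<close>
  ultimately show ?thesis using pq by simp
qed

lemma rpair_diff: "rpair (a - b) x = rpair a x - rpair b x"
  by (simp add: rpair_def algebra_simps)
lemma rpair_add: "rpair (a + b) x = rpair a x + rpair b x"
  by (simp add: rpair_def algebra_simps)
lemma rpair_scale: "rpair (c *\<^sub>R a) x = c * rpair a x"
  by (simp add: rpair_def algebra_simps)
lemma rpair_diff2: "rpair m (x - y) = rpair m x - rpair m y"
  by (simp add: rpair_def algebra_simps)
lemma rpair_add2: "rpair m (x + y) = rpair m x + rpair m y"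
  by (simp add: rpair_def algebra_simps)
lemma rpair_scale2: "rpair m (c *\<^sub>R x) = c * rpair m x"
  by (simp add: rpair_def algebra_simps)
lemma rpair_neg2: "rpair m (- x) = - rpair m x"
  by (simp add: rpair_def algebra_simps)
lemma rpair_zero2[simp]: "rpair m 0 = 0"
  by (simp add: rpair_def)
lemma rpair_rot_self: "rpair (rot p) p = 0"
  by (simp add: rpair_def rot_def algebra_simps)
lemma rpair_rot: "rpair (rot p) q = rdet p q"
  by (simp add: rpair_def rot_def rdet_def algebra_simps)

lemma rdual_rot:
  assumes "rdet p q = 1" "rpair D p = 0"
  shows "D = rpair D q *\<^sub>R rot p"
proof -
  obtain p1 p2 q1 q2 a b where pq: "p = (p1,p2)" "q = (q1,q2)" "D = (a,b)"
    by (cases p, cases q, cases D) auto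
  have d: "p1*q2 - p2*q1 = 1" using assms(1) pq by (simp add: rdet_def)
  have e: "a*p1+b*p2 = 0" using assms(2) pq by (simp add: rpair_def)
  have "a = (a*p1+b*p2)*q2 - (a*q1+b*q2)*p2" by (rule dual_c(1)[OF d])
  also have "\<dots> = (a*q1+b*q2) * (- p2)" using e by simp
  finally have A: "a = (a*q1+b*q2) * (- p2)" .
  have "b = -(a*p1+b*p2)*q1 + (a*q1+b*q2)*p1" by (rule dual_c(2)[OF d])
  also have "\<dots> = (a*q1+b*q2) * p1" using e by simp
  finally have B: "b = (a*q1+b*q2) * p1" .
  have "rpair D q *\<^sub>R rot p = ((a*q1+b*q2) * (- p2), (a*q1+b*q2) * p1)"
    unfolding pq rpair_def rot_def by simp
  then show ?thesis using A B pq by simp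
qed



locale fanctx = fixes r :: nat and n :: "nat \<Rightarrow> int \<times> int"
  assumes fan: "smooth_complete_fan r n"
begin

abbreviation NN where "NN j \<equiv> rvec (n j)"

lemma r3: "3 \<le> r" using fan by (simp add: smooth_complete_fan_def)

lemma nxt_eq: "j < r \<Longrightarrow> nxt r j = (if j + 1 = r then 0 else j + 1)"
  by (simp add: nxt_def)
lemma prv_eq: "j < r \<Longrightarrow> prv r j = (if j = 0 then r - 1 else j - 1)"
  using r3 unfolding prv_def
  by (auto simp: mod_if)

lemma nxt_lt: "j < r \<Longrightarrow> nxt r j < r" using r3 by (simp add: nxt_eq)
lemma prv_lt: "j < r \<Longrightarrow> prv r j < r" using r3 by (auto simp: prv_eq)
lemma nxt_prv: "j < r \<Longrightarrow> nxt r (prv r j) = j" using r3 by (auto simp: prv_eq nxt_eq)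
lemma prv_nxt: "j < r \<Longrightarrow> prv r (nxt r j) = j" using r3 by (auto simp: prv_eq nxt_eq)

lemma det1: "j < r \<Longrightarrow> det2 (n j) (n (nxt r j)) = 1"
  using fan by (simp add: smooth_complete_fan_def)

lemma rdet1: "j < r \<Longrightarrow> rdet (NN j) (NN (nxt r j)) = 1"
proof -
  assume j: "j < r"
  have "real_of_int (det2 (n j) (n (nxt r j))) = 1" using det1[OF j] by simp
  then show ?thesis by (simp add: rdet_def rvec_def det2_def)
qed

lemma NN_nz: "j < r \<Longrightarrow> NN j \<noteq> 0"
  using rdet1[of j] by (auto simp: rdet_def)

lemma uvec_eq: "j < r \<Longrightarrow> uvec r n j = (- snd (n j), fst (n j))"
  unfolding uvec_def
proof (rule the_equality)
  assume j: "j < r"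
  obtain p1 p2 q1 q2 where pq: "n j = (p1,p2)" "n (nxt r j) = (q1,q2)" by (cases "n j", cases "n (nxt r j)") auto
  have d: "p1*q2 - p2*q1 = 1" using det1[OF j] pq by (simp add: det2_def)
  have pr: "primitive (n j)" using fan j by (simp add: smooth_complete_fan_def)
  show "primitive (- snd (n j), fst (n j)) \<and> ipair (- snd (n j), fst (n j)) (n j) = 0 \<and>
        0 < ipair (- snd (n j), fst (n j)) (n (nxt r j))"
    using pr d pq by (simp add: primitive_def ipair_def gcd.commute algebra_simps)
  fix u assume u: "primitive u \<and> ipair u (n j) = 0 \<and> 0 < ipair u (n (nxt r j))"
  obtain a b where ab: "u = (a,b)" by (cases u)
  define k where "k = a*q1+b*q2"
  have e: "a*p1+b*p2 = 0" "k > 0" using u ab pq by (simp_all add: ipair_def k_def)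
  have A: "a = k * (- p2)"
  proof -
    have "a = (a*p1+b*p2)*q2 - (a*q1+b*q2)*p2" by (rule dual_c(1)[OF d])
    also have "\<dots> = k * (- p2)" using e by (simp add: k_def)
    finally show ?thesis .
  qed
  have B: "b = k * p1"
  proof -
    have "b = -(a*p1+b*p2)*q1 + (a*q1+b*q2)*p1" by (rule dual_c(2)[OF d])
    also have "\<dots> = k * p1" using e by (simp add: k_def)
    finally show ?thesis .
  qed
  have "k dvd a" "k dvd b" using A B by simp_all
  then have "k dvd gcd a b" by (rule gcd_greatest)
  then have "k dvd 1" using u ab by (simp only: primitive_def fst_conv snd_conv)
  then have "k = 1" using e(2) by (meson zdvd_imp_le dual_order.antisym zero_less_one int_one_le_iff_zero_less)
  then show "u = (- snd (n j), fst (n j))" using A B ab pq by simp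
qed

lemma rvec_uvec: "j < r \<Longrightarrow> rvec (uvec r n j) = rot (NN j)"
  by (simp add: uvec_eq rvec_def rot_def)

lemma selfint_eq: "j < r \<Longrightarrow> NN (nxt r j) = (- real_of_int (selfint r n j)) *\<^sub>R NN j - NN (prv r j)"
proof -
  assume j: "j < r"
  obtain p1 p2 q1 q2 w1 w2 where pq: "n (prv r j) = (p1,p2)" "n j = (q1,q2)" "n (nxt r j) = (w1,w2)"
    by (cases "n (prv r j)", cases "n j", cases "n (nxt r j)") auto
  have d1: "p1*q2 - p2*q1 = 1" using det1[OF prv_lt[OF j]] pq nxt_prv[OF j] by (simp add: det2_def)
  have d2: "q1*w2 - q2*w1 = 1" using det1[OF j] pq by (simp add: det2_def)
  define c where "c = p1*w2 - p2*w1"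
  have X: "p1 + w1 = c * q1 \<and> p2 + w2 = c * q2"
  proof -
    have z: "(p1+w1)*q2 - (p2+w2)*q1 = 0" using d1 d2 by (simp add: algebra_simps)
    have "p1 + w1 = ((p1+w1)*q2 - (p2+w2)*q1)*p1 + (p1*(p2+w2) - p2*(p1+w1))*q1" by (rule decomp_c(1)[OF d1])
    also have "\<dots> = c * q1" using z by (simp add: c_def algebra_simps)
    finally have 1: "p1 + w1 = c * q1" .
    have "p2 + w2 = ((p1+w1)*q2 - (p2+w2)*q1)*p2 + (p1*(p2+w2) - p2*(p1+w1))*q2" by (rule decomp_c(2)[OF d1])
    also have "\<dots> = c * q2" using z by (simp add: c_def algebra_simps)
    finally have 2: "p2 + w2 = c * q2" .
    show ?thesis using 1 2 by simp
  qed
  have "selfint r n j = - c"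
    unfolding selfint_def pq fst_conv snd_conv
  proof (rule the_equality)
    show "p1 + w1 = - (- c) * q1 \<and> p2 + w2 = - (- c) * q2" using X by simp
    fix b assume "p1 + w1 = - b * q1 \<and> p2 + w2 = - b * q2"
    then have "(b + c) * q1 = 0" "(b + c) * q2 = 0" using X by (simp_all add: algebra_simps)
    moreover have "q1 \<noteq> 0 \<or> q2 \<noteq> 0" using d2 by auto
    ultimately show "b = - c" by auto
  qed
  then have "real_of_int (w1) = - real_of_int (selfint r n j) * real_of_int q1 - real_of_int p1"
            "real_of_int (w2) = - real_of_int (selfint r n j) * real_of_int q2 - real_of_int p2"
    using X by (simp_all add: algebra_simps flip: of_int_mult of_int_add of_int_diff)
  then show ?thesis using pq by (simp add: rvec_def)
qed

lemma cone_iff: "j < r \<Longrightarrow> x \<in> maxcone r n j \<longleftrightarrow> 0 \<le> rdet x (NN (nxt r j)) \<and> 0 \<le> rdet (NN j) x"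
proof -
  assume j: "j < r"
  note d = rdet1[OF j]
  show ?thesis
  proof
    assume "x \<in> maxcone r n j"
    then obtain a c where "x = a *\<^sub>R NN j + c *\<^sub>R NN (nxt r j)" "0 \<le> a" "0 \<le> c"
      by (auto simp: maxcone_def)
    then show "0 \<le> rdet x (NN (nxt r j)) \<and> 0 \<le> rdet (NN j) x" using rcoord1[OF d] rcoord2[OF d] by simp
  next
    assume "0 \<le> rdet x (NN (nxt r j)) \<and> 0 \<le> rdet (NN j) x"
    then show "x \<in> maxcone r n j" unfolding maxcone_def using rdecomp[OF d, of x] by blast
  qed
qed

lemma NN_in1: "j < r \<Longrightarrow> NN j \<in> maxcone r n j"
  unfolding maxcone_def by (rule CollectI, rule exI[of _ 1], rule exI[of _ 0]) simp
lemma NN_in2: "j < r \<Longrightarrow> NN (nxt r j) \<in> maxcone r n j"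
  unfolding maxcone_def by (rule CollectI, rule exI[of _ 0], rule exI[of _ 1]) simp
lemma NN_in3: "j < r \<Longrightarrow> NN j \<in> maxcone r n (prv r j)"
  using NN_in2[OF prv_lt, of j] nxt_prv[of j] by simp

lemma closed_cone: "j < r \<Longrightarrow> closed (maxcone r n j)"
proof -
  assume j: "j < r"
  have "maxcone r n j = {x. 0 \<le> rdet x (NN (nxt r j))} \<inter> {x. 0 \<le> rdet (NN j) x}"
    using cone_iff[OF j] by auto
  also have "closed \<dots>" unfolding rdet_def
    by (intro closed_Int closed_Collect_le continuous_intros)
  finally show ?thesis .
qed

lemma cover: "\<exists>j<r. x \<in> maxcone r n j"
  using fan unfolding smooth_complete_fan_def by (metis UNIV_I UN_E atLeastLessThan_iff)

end


context fanctx begin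

lemma theta_lin_eq:
  assumes j: "j < r" and m: "\<forall>x\<in>maxcone r n j. \<theta> x = rpair m x"
  shows "theta_lin r n \<theta> j = m"
  unfolding theta_lin_def
proof (rule the_equality)
  show "\<forall>x\<in>maxcone r n j. \<theta> x = rpair m x" by (rule m)
  fix m' assume m': "\<forall>x\<in>maxcone r n j. \<theta> x = rpair m' x"
  show "m' = m"
    by (rule rpair_eq_basis[OF rdet1[OF j]]) (use m m' NN_in1[OF j] NN_in2[OF j] in auto)
qed

lemma theta_lin_spec:
  assumes s: "semi_integral_support_function r n \<theta>" and j: "j < r"
  shows "\<forall>x\<in>maxcone r n j. \<theta> x = rpair (theta_lin r n \<theta> j) x"
proof -
  obtain m where "\<forall>x\<in>maxcone r n j. \<theta> x = rpair m x"
    using s j unfolding semi_integral_support_function_def by blast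
  moreover from this have "theta_lin r n \<theta> j = m" by (rule theta_lin_eq[OF j])
  ultimately show ?thesis by simp
qed

lemma kink_eq:
  assumes j: "j < r"
    and D: "theta_lin r n \<theta> j - theta_lin r n \<theta> (prv r j) = (l / 2) *\<^sub>R rvec (uvec r n j)"
  shows "kink r n \<theta> j = l"
  unfolding kink_def
proof (rule the_equality)
  show "theta_lin r n \<theta> j - theta_lin r n \<theta> (prv r j) = (l / 2) *\<^sub>R rvec (uvec r n j)" by (rule D)
  fix l' assume h: "theta_lin r n \<theta> j - theta_lin r n \<theta> (prv r j) = (l' / 2) *\<^sub>R rvec (uvec r n j)"
  have "(l' / 2) *\<^sub>R rot (NN j) = (l / 2) *\<^sub>R rot (NN j)" using D h rvec_uvec[OF j] by metis
  moreover have "rot (NN j) \<noteq> 0" using NN_nz[OF j] by (auto simp: rot_def prod_eq_iff)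
  ultimately show "l' = l" by auto
qed

lemma kink_spec:
  assumes s: "semi_integral_support_function r n \<theta>" and j: "j < r"
  shows "theta_lin r n \<theta> j - theta_lin r n \<theta> (prv r j) = (kink r n \<theta> j / 2) *\<^sub>R rvec (uvec r n j)"
    and "kink r n \<theta> j = 2 * rpair (theta_lin r n \<theta> j - theta_lin r n \<theta> (prv r j)) (NN (nxt r j))"
proof -
  define D where "D = theta_lin r n \<theta> j - theta_lin r n \<theta> (prv r j)"
  have "rpair D (NN j) = 0"
    using bspec[OF theta_lin_spec[OF s j] NN_in1[OF j]] bspec[OF theta_lin_spec[OF s prv_lt[OF j]] NN_in3[OF j]]
    by (simp add: D_def rpair_diff)
  then have "D = rpair D (NN (nxt r j)) *\<^sub>R rot (NN j)" by (rule rdual_rot[OF rdet1[OF j]])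
  then have E1: "D = ((2 * rpair D (NN (nxt r j))) / 2) *\<^sub>R rvec (uvec r n j)" using rvec_uvec[OF j] by simp
  then have E2: "kink r n \<theta> j = 2 * rpair D (NN (nxt r j))" using kink_eq[OF j] D_def by simp
  then show "kink r n \<theta> j = 2 * rpair (theta_lin r n \<theta> j - theta_lin r n \<theta> (prv r j)) (NN (nxt r j))"
    by (simp add: D_def)
  show "theta_lin r n \<theta> j - theta_lin r n \<theta> (prv r j) = (kink r n \<theta> j / 2) *\<^sub>R rvec (uvec r n j)"
    using E1 E2 by (simp add: D_def)
qed

lemma kink_vals:
  assumes s: "semi_integral_support_function r n \<theta>" and j: "j < r"
  shows "kink r n \<theta> j = 2 * (\<theta> (NN (nxt r j)) + real_of_int (selfint r n j) * \<theta> (NN j) + \<theta> (NN (prv r j)))"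
proof -
  have pj: "prv r j < r" by (rule prv_lt[OF j])
  have a: "rpair (theta_lin r n \<theta> j) (NN (nxt r j)) = \<theta> (NN (nxt r j))"
    using theta_lin_spec[OF s j] NN_in2[OF j] by simp
  have b: "rpair (theta_lin r n \<theta> (prv r j)) (NN j) = \<theta> (NN j)"
    using theta_lin_spec[OF s pj] NN_in3[OF j] by simp
  have c: "rpair (theta_lin r n \<theta> (prv r j)) (NN (prv r j)) = \<theta> (NN (prv r j))"
    using theta_lin_spec[OF s pj] NN_in1[OF pj] by simp
  show ?thesis
    unfolding kink_spec(2)[OF s j] rpair_diff
    by (subst (2) selfint_eq[OF j]) (simp add: rpair_diff2 rpair_scale2 rpair_neg2 a b c algebra_simps)
qed

lemma sum_prv: "(\<Sum>j<r. f (prv r j)) = (\<Sum>j<r. f j)"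
proof (rule sum.reindex_bij_betw)
  show "bij_betw (prv r) {..<r} {..<r}"
    by (rule bij_betw_byWitness[where f'="nxt r"]) (auto simp: prv_lt nxt_lt nxt_prv prv_nxt)
qed

lemma part1:
  assumes s: "semi_integral_support_function r n \<theta>"
  shows "\<exists>l::nat \<Rightarrow> int. (\<forall>j<r. kink r n \<theta> j = real_of_int (l j)) \<and> twisting_numbers r n l"
proof -
  have "\<forall>j. \<exists>k::int. j < r \<longrightarrow> \<theta> (NN j) = real_of_int k + 1/2"
    using s unfolding semi_integral_support_function_def by blast
  from choice[OF this] obtain z where z: "\<And>j. j < r \<Longrightarrow> \<theta> (NN j) = real_of_int (z j) + 1/2" by blast
  define l where "l j = 2 * (z (nxt r j) + selfint r n j * z j + z (prv r j)) + selfint r n j + 2" for j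
  have K: "kink r n \<theta> j = real_of_int (l j)" if j: "j < r" for j
    unfolding kink_vals[OF s j] z[OF j] z[OF nxt_lt[OF j]] z[OF prv_lt[OF j]] l_def
    by (simp add: algebra_simps)
  have M: "l j mod 2 = selfint r n j mod 2" for j
  proof -
    have "\<forall>t b::int. (2 * t + b + 2) mod 2 = b mod 2" by presburger
    then show ?thesis unfolding l_def by blast
  qed
  have "(\<Sum>j<r. theta_lin r n \<theta> j - theta_lin r n \<theta> (prv r j)) = 0"
    by (simp add: sum_subtractf sum_prv)
  then have S: "(\<Sum>j<r. (real_of_int (l j) / 2) *\<^sub>R rvec (uvec r n j)) = 0"
    using kink_spec(1)[OF s] K by (metis (no_types, lifting) lessThan_iff sum.cong)
  have "real_of_int (\<Sum>j<r. l j * fst (uvec r n j)) = 2 * fst (\<Sum>j<r. (real_of_int (l j) / 2) *\<^sub>R rvec (uvec r n j))"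
    by (simp add: fst_sum sum_distrib_left rvec_def)
  also have "\<dots> = 0" using S by simp
  finally have 1: "(\<Sum>j<r. l j * fst (uvec r n j)) = 0" using of_int_eq_0_iff by blast
  have "real_of_int (\<Sum>j<r. l j * snd (uvec r n j)) = 2 * snd (\<Sum>j<r. (real_of_int (l j) / 2) *\<^sub>R rvec (uvec r n j))"
    by (simp add: snd_sum sum_distrib_left rvec_def)
  also have "\<dots> = 0" using S by simp
  finally have 2: "(\<Sum>j<r. l j * snd (uvec r n j)) = 0" using of_int_eq_0_iff by blast
  show ?thesis using K M 1 2 unfolding twisting_numbers_def by blast
qed

end


lemma prim_parallel:
  assumes pv: "primitive v" and pw: "primitive w" and a: "a > 0" and c: "c > 0"
    and e: "a *\<^sub>R rvec v = c *\<^sub>R rvec w"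
  shows "v = w"
proof -
  obtain v1 v2 w1 w2 where vw: "v = (v1,v2)" "w = (w1,w2)" by (cases v, cases w) auto
  have g: "gcd v1 v2 = 1" "gcd w1 w2 = 1" using pv pw vw by (simp_all add: primitive_def)
  have e1: "a * v1 = c * w1" "a * v2 = c * w2" using e vw by (simp_all add: rvec_def)
  have "a * (v1 * w2 - v2 * w1) = (a * v1) * w2 - (a * v2) * w1" by (simp add: algebra_simps)
  also have "\<dots> = 0" using e1 by simp
  finally have "real_of_int (v1 * w2 - v2 * w1) = 0" using a by simp
  then have dd: "v1 * w2 = v2 * w1" by (simp only: of_int_eq_0_iff)
  obtain s t where st: "s * v1 + t * v2 = 1" using bezout_int[of v1 v2] g by auto
  define k where "k = s * w1 + t * w2"
  have k1: "w1 = k * v1"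
  proof -
    have "w1 = w1 * (s * v1 + t * v2)" using st by simp
    also have "\<dots> = s * v1 * w1 + t * (v2 * w1)" by (simp add: algebra_simps)
    also have "\<dots> = k * v1" using dd by (simp add: k_def algebra_simps)
    finally show ?thesis .
  qed
  have k2: "w2 = k * v2"
  proof -
    have "w2 = w2 * (s * v1 + t * v2)" using st by simp
    also have "\<dots> = s * (v1 * w2) + t * v2 * w2" by (simp add: algebra_simps)
    also have "\<dots> = k * v2" using dd by (simp add: k_def algebra_simps)
    finally show ?thesis .
  qed
  have "\<bar>k\<bar> * gcd v1 v2 = gcd (k * v1) (k * v2)" by (rule gcd_mult_distrib_int)
  then have "\<bar>k\<bar> = 1" using g k1 k2 by simp
  have vnz: "v1 \<noteq> 0 \<or> v2 \<noteq> 0" using g by auto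
  have "a = c * k"
  proof (cases "v1 = 0")
    case True
    then have "v2 \<noteq> 0" using vnz by simp
    moreover have "a * v2 = (c * k) * v2" using e1(2) k2 by simp
    ultimately show ?thesis by simp
  next
    case False
    moreover have "a * v1 = (c * k) * v1" using e1(1) k1 by simp
    ultimately show ?thesis by simp
  qed
  then have "k > 0" using a c by (simp add: zero_less_mult_iff)
  then have "k = 1" using \<open>\<bar>k\<bar> = 1\<close> by simp
  then show ?thesis using vw k1 k2 by simp
qed

context fanctx begin

lemma strict_interior:
  assumes j: "j < r"
  shows "{y. 0 < rdet y (NN (nxt r j)) \<and> 0 < rdet (NN j) y} \<subseteq> interior (maxcone r n j)"
proof (rule interior_maximal)
  show "{y. 0 < rdet y (NN (nxt r j)) \<and> 0 < rdet (NN j) y} \<subseteq> maxcone r n j"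
    using cone_iff[OF j] by auto
  have "{y. 0 < rdet y (NN (nxt r j)) \<and> 0 < rdet (NN j) y} =
        {y. 0 < rdet y (NN (nxt r j))} \<inter> {y. 0 < rdet (NN j) y}" by auto
  also have "open \<dots>" unfolding rdet_def by (intro open_Int open_Collect_less continuous_intros)
  finally show "open {y. 0 < rdet y (NN (nxt r j)) \<and> 0 < rdet (NN j) y}" .
qed

lemma boundary:
  assumes j: "j < r" and k: "k < r" and jk: "j \<noteq> k"
    and xj: "x \<in> maxcone r n j" and xk: "x \<in> maxcone r n k"
  shows "(\<exists>a\<ge>0. x = a *\<^sub>R NN j) \<or> (\<exists>c\<ge>0. x = c *\<^sub>R NN (nxt r j))"
proof -
  let ?p = "NN j" and ?q = "NN (nxt r j)"
  have d: "rdet ?p ?q = 1" by (rule rdet1[OF j])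
  have A: "0 \<le> rdet x ?q" and C: "0 \<le> rdet ?p x" using cone_iff[OF j] xj by auto
  have dec: "x = rdet x ?q *\<^sub>R ?p + rdet ?p x *\<^sub>R ?q" by (rule rdecomp[OF d])
  show ?thesis
  proof (cases "rdet x ?q = 0 \<or> rdet ?p x = 0")
    case True
    then show ?thesis
    proof
      assume "rdet x ?q = 0"
      then have "x = rdet ?p x *\<^sub>R ?q" using dec by simp
      then show ?thesis using C by blast
    next
      assume "rdet ?p x = 0"
      then have "x = rdet x ?q *\<^sub>R ?p" using dec by simp
      then show ?thesis using A by blast
    qed
  next
    case False
    let ?S = "{y. 0 < rdet y ?q \<and> 0 < rdet ?p y}"
    have xS: "x \<in> ?S" using A C False by auto
    have "?S = {y. 0 < rdet y ?q} \<inter> {y. 0 < rdet ?p y}" by auto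
    also have "open \<dots>" unfolding rdet_def by (intro open_Int open_Collect_less continuous_intros)
    finally have oS: "open ?S" .
    obtain e where e: "e > 0" "ball x e \<subseteq> ?S" using open_contains_ball[of ?S] oS xS by blast
    let ?p' = "NN k" and ?q' = "NN (nxt r k)"
    have d': "rdet ?p' ?q' = 1" by (rule rdet1[OF k])
    have A': "0 \<le> rdet x ?q'" and C': "0 \<le> rdet ?p' x" using cone_iff[OF k] xk by auto
    define w where "w = ?p' + ?q'"
    define \<epsilon> where "\<epsilon> = e / (2 * (norm w + 1))"
    have ep: "\<epsilon> > 0" proof -
      have "2 * (norm w + 1) > 0" by (simp add: add_nonneg_pos)
      then show ?thesis unfolding \<epsilon>_def by (rule divide_pos_pos[OF e(1)])
    qed
    define y where "y = x + \<epsilon> *\<^sub>R w"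
    have "rdet y ?q' = rdet x ?q' + \<epsilon> * rdet ?p' ?q'"
      by (simp add: y_def w_def rdet_def algebra_simps)
    then have y1: "0 < rdet y ?q'" using d' A' ep by simp
    have "rdet ?p' y = rdet ?p' x + \<epsilon> * rdet ?p' ?q'"
      by (simp add: y_def w_def rdet_def algebra_simps)
    then have y2: "0 < rdet ?p' y" using d' C' ep by simp
    have yk: "y \<in> interior (maxcone r n k)" using strict_interior[OF k] y1 y2 by auto
    have "dist x y = \<epsilon> * norm w" using ep by (simp add: y_def dist_norm)
    also have "\<dots> < e"
    proof -
      have "\<epsilon> * norm w = e * (norm w / (2 * (norm w + 1)))" by (simp add: \<epsilon>_def)
      also have "\<dots> < e * 1"
      proof (intro mult_strict_left_mono e(1))
        have "0 < 2 * (norm w + 1)" by (simp add: add_nonneg_pos)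
        moreover have "norm w < 2 * (norm w + 1)" by (smt (verit) norm_ge_zero)
        ultimately show "norm w / (2 * (norm w + 1)) < 1" by (simp add: divide_less_eq)
      qed
      finally show ?thesis by simp
    qed
    finally have "y \<in> ?S" using e by auto
    then have yj: "y \<in> interior (maxcone r n j)" using strict_interior[OF j] by auto
    have "interior (maxcone r n j) \<inter> interior (maxcone r n k) = {}"
      using fan j k jk unfolding smooth_complete_fan_def by blast
    then show ?thesis using yj yk by blast
  qed
qed

end


context fanctx begin

lemma part2:
  assumes tw: "twisting_numbers r n l"
  shows "\<exists>\<theta>. semi_integral_support_function r n \<theta> \<and>
                 (\<forall>j<r. kink r n \<theta> j = real_of_int (l j)) \<and>
                 (\<forall>\<theta>'. semi_integral_support_function r n \<theta>' \<and>
                        (\<forall>j<r. kink r n \<theta>' j = real_of_int (l j)) \<longrightarrow>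
                        (\<exists>m::int \<times> int. \<forall>x. \<theta>' x = \<theta> x + rpair (rvec m) x))"
proof -
  have r0: "0 < r" using r3 by simp
  have nxt0: "nxt r 0 = 1" using r3 by (simp add: nxt_def)
  define T where "T i = (real_of_int (l i) / 2) *\<^sub>R rvec (uvec r n i)" for i
  define p0 where "p0 = NN 0"
  define q0 where "q0 = NN 1"
  have d0: "rdet p0 q0 = 1" using rdet1[OF r0] nxt0 by (simp add: p0_def q0_def)
  define m0 where "m0 = (1/2) *\<^sub>R (snd q0, - fst q0) + (1/2) *\<^sub>R (- snd p0, fst p0)"
  have "rpair m0 p0 = rdet p0 q0 / 2" "rpair m0 q0 = rdet p0 q0 / 2"
    by (simp_all add: m0_def rpair_def rdet_def algebra_simps)
  then have m0p: "rpair m0 p0 = 1/2" "rpair m0 q0 = 1/2" using d0 by simp_all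
  define m where "m j = m0 + (\<Sum>i<j. T (Suc i))" for j
  have mSuc: "m (Suc k) = m k + T (Suc k)" for k by (simp add: m_def)
  have sumT: "(\<Sum>i<r. T i) = 0"
  proof -
    have "fst (\<Sum>i<r. T i) = (\<Sum>i<r. real_of_int (l i * fst (uvec r n i))) / 2"
      by (simp add: fst_sum T_def rvec_def sum_divide_distrib)
    also have "(\<Sum>i<r. real_of_int (l i * fst (uvec r n i))) = real_of_int (\<Sum>i<r. l i * fst (uvec r n i))"
      by (rule of_int_sum[symmetric])
    finally have e1: "fst (\<Sum>i<r. T i) = real_of_int (\<Sum>i<r. l i * fst (uvec r n i)) / 2" .
    have Z1: "(\<Sum>i<r. l i * fst (uvec r n i)) = 0" using tw by (simp add: twisting_numbers_def)
    have 1: "fst (\<Sum>i<r. T i) = 0" using e1 unfolding Z1 by simp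
    have "snd (\<Sum>i<r. T i) = (\<Sum>i<r. real_of_int (l i * snd (uvec r n i))) / 2"
      by (simp add: snd_sum T_def rvec_def sum_divide_distrib)
    also have "(\<Sum>i<r. real_of_int (l i * snd (uvec r n i))) = real_of_int (\<Sum>i<r. l i * snd (uvec r n i))"
      by (rule of_int_sum[symmetric])
    finally have e2: "snd (\<Sum>i<r. T i) = real_of_int (\<Sum>i<r. l i * snd (uvec r n i)) / 2" .
    have Z2: "(\<Sum>i<r. l i * snd (uvec r n i)) = 0" using tw by (simp add: twisting_numbers_def)
    have 2: "snd (\<Sum>i<r. T i) = 0" using e2 unfolding Z2 by simp
    show ?thesis using 1 2 by (simp add: prod_eq_iff)
  qed
  have C1: "m j - m (prv r j) = T j" if j: "j < r" for j
  proof (cases j)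
    case 0
    have rr: "r = Suc (r - 1)" using r0 by simp
    have "(\<Sum>i<r. T i) = T 0 + (\<Sum>i<r-1. T (Suc i))"
      by (subst rr, subst sum.lessThan_Suc_shift) simp
    then have "T 0 = - (\<Sum>i<r-1. T (Suc i))" using sumT by (simp add: eq_neg_iff_add_eq_0 add.commute)
    then show ?thesis using 0 j by (simp add: prv_eq m_def)
  next
    case (Suc k)
    then show ?thesis using j by (simp add: prv_eq mSuc)
  qed
  have Trot: "rpair (T i) x = (real_of_int (l i) / 2) * rdet (NN i) x" if "i < r" for i x
    using that by (simp add: T_def rvec_uvec rpair_scale rpair_rot)
  have C2: "j < r \<longrightarrow> (\<exists>z::int. rpair (m j) (NN j) = real_of_int z + 1/2) \<and>
                   (\<exists>z::int. rpair (m j) (NN (nxt r j)) = real_of_int z + 1/2)" for j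
  proof (induction j)
    case 0
    show ?case using m0p nxt0 by (auto simp: m_def p0_def q0_def intro: exI[of _ 0])
  next
    case (Suc j)
    show ?case
    proof
      assume sj: "Suc j < r"
      then have j: "j < r" by simp
      have nj: "nxt r j = Suc j" using sj by (simp add: nxt_def)
      have pj: "prv r (Suc j) = j" using sj by (simp add: prv_eq)
      obtain z z' where z: "rpair (m j) (NN j) = real_of_int z + 1/2"
        and z': "rpair (m j) (NN (Suc j)) = real_of_int z' + 1/2" using Suc.IH j nj by auto
      define b where "b = selfint r n (Suc j)"
      have "2 dvd (l (Suc j) - b)" using tw sj by (simp add: twisting_numbers_def b_def mod_eq_dvd_iff)
      then obtain K where K: "l (Suc j) = b + 2 * K" by (metis add_diff_cancel_left' diff_add_cancel dvdE)
      have r1: "rpair (m (Suc j)) (NN (Suc j)) = real_of_int z' + 1/2"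
        using z' Trot[OF sj, of "NN (Suc j)"] by (simp add: mSuc rpair_add rdet_def)
      have X: "NN (nxt r (Suc j)) = (- real_of_int b) *\<^sub>R NN (Suc j) - NN j"
        using selfint_eq[OF sj] pj by (simp add: b_def)
      have "rpair (m (Suc j)) (NN (nxt r (Suc j))) =
            rpair (m j) (NN (nxt r (Suc j))) + real_of_int (l (Suc j)) / 2"
        using Trot[OF sj] rdet1[OF sj] by (simp add: mSuc rpair_add)
      also have "\<dots> = real_of_int (- b * z' - z + K - 1) + 1/2"
        unfolding X rpair_diff2 rpair_scale2 z z' K by (simp add: algebra_simps)
      finally show "(\<exists>z::int. rpair (m (Suc j)) (NN (Suc j)) = real_of_int z + 1/2) \<and>
                   (\<exists>z::int. rpair (m (Suc j)) (NN (nxt r (Suc j))) = real_of_int z + 1/2)"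
        using r1 by blast
    qed
  qed
  define v where "v k = rpair (m k) (NN k)" for k
  have half: "\<exists>z::int. v k = real_of_int z + 1/2" if "k < r" for k
    using C2[of k] that by (auto simp: v_def)
  have AG: "rpair (m j) (NN (nxt r j)) = v (nxt r j)" if j: "j < r" for j
  proof -
    have "m (nxt r j) = m j + T (nxt r j)" using C1[OF nxt_lt[OF j]] prv_nxt[OF j] by (simp add: algebra_simps)
    then show ?thesis using Trot[OF nxt_lt[OF j], of "NN (nxt r j)"] by (simp add: v_def rpair_add rdet_def)
  qed
  have ray: "rpair (m j) (a *\<^sub>R NN p) = a * v p" if "j < r" "p = j \<or> p = nxt r j" for j p a
    using that AG by (auto simp: rpair_scale2 v_def)
  have W: "rpair (m j) x = rpair (m k) x"
    if j: "j < r" and k: "k < r" and xj: "x \<in> maxcone r n j" and xk: "x \<in> maxcone r n k" for j k x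
  proof (cases "j = k")
    case True then show ?thesis by simp
  next
    case False
    obtain a p where ap: "a \<ge> 0" "p = j \<or> p = nxt r j" "x = a *\<^sub>R NN p"
      using boundary[OF j k False xj xk] by blast
    obtain c q where cq: "c \<ge> 0" "q = k \<or> q = nxt r k" "x = c *\<^sub>R NN q"
      using boundary[OF k j _ xk xj] False by blast
    have p: "p < r" using ap j nxt_lt by auto
    have q: "q < r" using cq k nxt_lt by auto
    show ?thesis
    proof (cases "a = 0 \<or> c = 0")
      case True
      then have "x = 0" using ap cq by auto
      then show ?thesis by simp
    next
      case False
      then have "a > 0" "c > 0" using ap cq by auto
      moreover have "primitive (n p)" "primitive (n q)" using fan p q by (simp_all add: smooth_complete_fan_def)
      ultimately have "n p = n q" using prim_parallel ap cq by metis
      then have pq: "p = q" using fan p q unfolding smooth_complete_fan_def inj_on_def by auto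
      then have "a *\<^sub>R NN p = c *\<^sub>R NN p" using ap(3) cq(3) by metis
      then have "a = c" using NN_nz[OF p] by simp
      then show ?thesis using ray[OF j ap(2)] ray[OF k cq(2)] ap cq pq by simp
    qed
  qed
  define \<theta> where "\<theta> x = rpair (m (SOME j. j < r \<and> x \<in> maxcone r n j)) x" for x
  have \<theta>on: "\<theta> x = rpair (m j) x" if j: "j < r" and xj: "x \<in> maxcone r n j" for j x
  proof -
    have "\<exists>j. j < r \<and> x \<in> maxcone r n j" using j xj by blast
    then have "(SOME j. j < r \<and> x \<in> maxcone r n j) < r \<and> x \<in> maxcone r n (SOME j. j < r \<and> x \<in> maxcone r n j)"
      by (rule someI_ex)
    then show ?thesis unfolding \<theta>_def using W j xj by blast
  qed
  have cont: "continuous_on UNIV \<theta>"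
  proof -
    have U: "UNIV = (\<Union>j\<in>{..<r}. maxcone r n j)" using cover by auto
    have "continuous_on (\<Union>j\<in>{..<r}. maxcone r n j) \<theta>"
    proof (rule continuous_on_closed_Union)
      fix j assume "j \<in> {..<r}"
      then have j: "j < r" by simp
      show "closed (maxcone r n j)" by (rule closed_cone[OF j])
      have "continuous_on (maxcone r n j) (\<lambda>x. rpair (m j) x)"
        unfolding rpair_def by (intro continuous_intros)
      then show "continuous_on (maxcone r n j) \<theta>"
        using \<theta>on[OF j] by (simp cong: continuous_on_cong)
    qed simp
    then show ?thesis using U by simp
  qed
  have semi: "semi_integral_support_function r n \<theta>"
    unfolding semi_integral_support_function_def
  proof (intro conjI allI impI)
    show "continuous_on UNIV \<theta>" by (rule cont)
    fix j assume j: "j < r"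
    show "\<exists>m. \<forall>x\<in>maxcone r n j. \<theta> x = rpair m x" using \<theta>on[OF j] by blast
  next
    fix j assume j: "j < r"
    show "\<exists>k::int. \<theta> (NN j) = real_of_int k + 1/2"
      using half[OF j] \<theta>on[OF j NN_in1[OF j]] by (simp add: v_def)
  qed
  have TL: "theta_lin r n \<theta> j = m j" if "j < r" for j
    using theta_lin_eq[OF that] \<theta>on[OF that] by blast
  have kinks: "kink r n \<theta> j = real_of_int (l j)" if j: "j < r" for j
    by (rule kink_eq[OF j]) (simp add: TL[OF j] TL[OF prv_lt[OF j]] C1[OF j] T_def)
  have uniq: "\<exists>mm::int \<times> int. \<forall>x. \<theta>' x = \<theta> x + rpair (rvec mm) x"
    if s': "semi_integral_support_function r n \<theta>'" and k': "\<forall>j<r. kink r n \<theta>' j = real_of_int (l j)"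
    for \<theta>'
  proof -
    define d where "d j = theta_lin r n \<theta>' j - m j" for j
    have dp: "d j = d (prv r j)" if j: "j < r" for j
    proof -
      have "theta_lin r n \<theta>' j - theta_lin r n \<theta>' (prv r j) = T j"
        using kink_spec(1)[OF s' j] k' j by (simp add: T_def)
      then show ?thesis using C1[OF j] by (simp add: d_def algebra_simps)
    qed
    have dall: "j < r \<longrightarrow> d j = d 0" for j
    proof (induction j)
      case (Suc j)
      show ?case using dp[of "Suc j"] Suc.IH by (auto simp: prv_eq)
    qed simp
    have rep: "\<theta>' x = \<theta> x + rpair (d 0) x" for x
    proof -
      obtain j where j: "j < r" "x \<in> maxcone r n j" using cover by blast
      have "\<theta>' x = rpair (theta_lin r n \<theta>' j) x" using theta_lin_spec[OF s' j(1)] j(2) by blast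
      also have "theta_lin r n \<theta>' j = m j + d 0" using dall[of j] j(1) unfolding d_def by (metis add.commute diff_add_cancel)
      finally show ?thesis using \<theta>on[OF j] by (simp add: rpair_add)
    qed
    have "\<forall>j. \<exists>k::int. j < r \<longrightarrow> \<theta>' (NN j) = real_of_int k + 1/2"
      using s' unfolding semi_integral_support_function_def by blast
    from choice[OF this] obtain z' where z': "\<And>j. j < r \<Longrightarrow> \<theta>' (NN j) = real_of_int (z' j) + 1/2" by blast
    have r1: "1 < r" using r3 by simp
    obtain za where za: "v 0 = real_of_int za + 1/2" using half[OF r0] by blast
    obtain zb where zb: "v 1 = real_of_int zb + 1/2" using half[OF r1] by blast
    define A where "A = z' 0 - za"
    define B where "B = z' 1 - zb"
    have dA: "rpair (d 0) p0 = real_of_int A"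
    proof -
      have "rpair (d 0) p0 = \<theta>' (NN 0) - v 0"
        using rep[of "NN 0"] \<theta>on[OF r0 NN_in1[OF r0]] by (simp add: p0_def v_def)
      then show ?thesis using z'[OF r0] za by (simp add: A_def)
    qed
    have dB: "rpair (d 0) q0 = real_of_int B"
    proof -
      have "rpair (d 0) q0 = \<theta>' (NN 1) - v 1"
        using rep[of "NN 1"] \<theta>on[OF r0 NN_in2[OF r0]] AG[OF r0] nxt0 by (simp add: q0_def)
      then show ?thesis using z'[OF r1] zb by (simp add: B_def)
    qed
    define mm where "mm = (A * snd (n 1) - B * snd (n 0), - A * fst (n 1) + B * fst (n 0))"
    have "rpair (rvec mm) p0 = real_of_int A * rdet p0 q0" "rpair (rvec mm) q0 = real_of_int B * rdet p0 q0"
      by (simp_all add: mm_def rpair_def rvec_def rdet_def p0_def q0_def algebra_simps)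
    then have "rvec mm = d 0"
      using d0 dA dB by (intro rpair_eq_basis[OF d0]) simp_all
    then show ?thesis using rep by metis
  qed
  show ?thesis using semi kinks uniq by blast
qed

end

theorem proposition4p3:
  fixes r :: nat and n :: "nat \<Rightarrow> int \<times> int"
  assumes fan: "smooth_complete_fan r n"
  shows "(\<forall>\<theta>. semi_integral_support_function r n \<theta> \<longrightarrow>
            (\<exists>l::nat \<Rightarrow> int. (\<forall>j<r. kink r n \<theta> j = real_of_int (l j)) \<and> twisting_numbers r n l))
       \<and> (\<forall>l::nat \<Rightarrow> int. twisting_numbers r n l \<longrightarrow>
            (\<exists>\<theta>. semi_integral_support_function r n \<theta> \<and>
                 (\<forall>j<r. kink r n \<theta> j = real_of_int (l j)) \<and>
                 (\<forall>\<theta>'. semi_integral_support_function r n \<theta>' \<and>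
                        (\<forall>j<r. kink r n \<theta>' j = real_of_int (l j)) \<longrightarrow>
                        (\<exists>m::int \<times> int. \<forall>x. \<theta>' x = \<theta> x + rpair (rvec m) x))))"
proof -
  interpret fanctx r n by unfold_locales (rule fan)
  show ?thesis using part1 part2 by blast
qed


end
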